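(* In the setting of the context, let $i\in\{1,\dots,n\}$ and let $(x,y)\in\mathbb{Z}^2$ with $\gcd(x,y)=1$, $(x,y)\notin\mathbf{A}$, $0<y\le Y_S$, $|F(x,y)|\le h$ and $|L_i(x,y)|>\frac{1}{2y}$. Then $$|m(x,y)-\beta_i(x,y)|\le \frac72+2h^{1/n}Y_S.$$
   Context: Setting: $n\ge3$; $F(x,y)=\sum_{i=0}^s a_ix^{n_i}y^{n-n_i}\in\mathbb{Z}[x,y]$ of degree $n$, irreducible over $\mathbb{Q}$, all $a_i\neq0$, $0=n_0<\dots<n_s=n$, discriminant $D$. $R=n^{800\log^2n}$; $h$ a positive integer and $\kappa>1$ an integer with $h\le |D|^{\frac{1}{2(n-1)(2+1/\kappa)}}/\big((3R)^{n/2}(ns)^{2s+n}\big)$; $Y_S=e^6s(ns)^{2s/n}h^{1/(\kappa n)}$. Write $F(x,y)=a\prod_{i=1}^n(x-\alpha_iy)$ ($\alpha_i$ the roots of $F(x,1)$) and $L_i(x,y)=x-\alpha_iy$. A "solution" is a pair $(x,y)\in\mathbb{Z}^2$ with $\gcd(x,y)=1$ and $1\le|F(x,y)|\le h$, with $(x,y)$ and $(-x,-y)$ identified. Assume there is a solution with $0\le y\le Y_S$, and fix one such, $(x_0,y_0)$, with $y_0\ge0$ minimal. Index the roots so that $|L_1(x_0,y_0)|=\min_i|L_i(x_0,y_0)|$. There is at most one solution $(x^*,y^* )$ with $0<y^*\le Y_S$ and $|L_1(x^*,y^* )|<1/(2Y_S)$; let $\mathbf{A}=\{(x_0,y_0)\}$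 together with $(x^*,y^* )$ if it exists. For a primitive $(x,y)$ choose integers $x',y'$ with $x'y-xy'=1$ and set $\beta_j(x,y)=-L_j(x',y')/L_j(x,y)$ for $j=1,\dots,n$ (so that $F(ux+wx',uy+wy')=F(x,y)\prod_j(u-\beta_j(x,y)w)$), and let $m(x,y)$ be an integer with $|\mathrm{Re}\,\beta_1(x,y)-m(x,y)|\le 1/2$. *)

theory Defs
  imports "HOL-Analysis.Analysis" "HOL-Computational_Algebra.Computational_Algebra"
begin

definition binform :: "int poly \<Rightarrow> int \<Rightarrow> int \<Rightarrow> int" where
  "binform f x y = (\<Sum>k\<le>degree f. coeff f k * x ^ k * y ^ (degree f - k))"

definition nterms :: "int poly \<Rightarrow> nat" where
  "nterms f = card {k. coeff f k \<noteq> 0} - 1"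

definition Lf :: "(nat \<Rightarrow> complex) \<Rightarrow> nat \<Rightarrow> int \<Rightarrow> int \<Rightarrow> complex" where
  "Lf alpha j x y = of_int x - alpha j * of_int y"

text \<open>beta_j(x,y) = - L_j(x',y') / L_j(x,y), for a chosen (x',y') with x' y - x y' = 1.\<close>
definition beta :: "(nat \<Rightarrow> complex) \<Rightarrow> nat \<Rightarrow> int \<Rightarrow> int \<Rightarrow> int \<Rightarrow> int \<Rightarrow> complex" where
  "beta alpha j x y x' y' = - Lf alpha j x' y' / Lf alpha j x y"

definition disc :: "int poly \<Rightarrow> (nat \<Rightarrow> complex) \<Rightarrow> complex" where
  "disc f alpha = of_int (lead_coeff f) ^ (2 * degree f - 2) *
     (\<Prod>i\<in>{1..degree f}. \<Prod>j\<in>{i<..degree f}. (alpha i - alpha j) ^ 2)"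

definition is_solution :: "int poly \<Rightarrow> nat \<Rightarrow> int \<Rightarrow> int \<Rightarrow> bool" where
  "is_solution f h x y \<longleftrightarrow> coprime x y \<and> 1 \<le> \<bar>binform f x y\<bar> \<and> \<bar>binform f x y\<bar> \<le> int h"

definition R_const :: "nat \<Rightarrow> real" where
  "R_const n = real n powr (800 * (ln (real n)) ^ 2)"

definition Y_S :: "nat \<Rightarrow> nat \<Rightarrow> nat \<Rightarrow> nat \<Rightarrow> real" where
  "Y_S n s h \<kappa> = exp 6 * real s * (real n * real s) powr (2 * real s / real n)
                   * real h powr (1 / (real \<kappa> * real n))"

end

theory Submission imports Defs begin
lemma binform_poly:
  fixes f :: "int poly" and x y :: int
  assumes "y \<noteq> 0"
  shows "rat_of_int (binform f x y) = rat_of_int y ^ degree f * poly (map_poly rat_of_int f) (rat_of_int x / rat_of_int y)"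
proof -
  have "rat_of_int y ^ degree f * poly (map_poly rat_of_int f) (rat_of_int x / rat_of_int y)
      = (\<Sum>k\<le>degree f. rat_of_int y ^ degree f * (rat_of_int (coeff f k) * (rat_of_int x / rat_of_int y) ^ k))"
    by (simp add: poly_altdef sum_distrib_left degree_map_poly coeff_map_poly)
  also have "\<dots> = (\<Sum>k\<le>degree f. rat_of_int (coeff f k * x ^ k * y ^ (degree f - k)))"
  proof (rule sum.cong)
    fix k assume "k \<in> {..degree f}"
    then have "degree f = k + (degree f - k)" by simp
    then have e: "rat_of_int y ^ degree f = rat_of_int y ^ k * rat_of_int y ^ (degree f - k)"
      by (metis power_add)
    have "rat_of_int y ^ k \<noteq> 0" using assms by simp
    then show "rat_of_int y ^ degree f * (rat_of_int (coeff f k) * (rat_of_int x / rat_of_int y) ^ k)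
        = rat_of_int (coeff f k * x ^ k * y ^ (degree f - k))"
      unfolding e using assms by (simp add: power_divide)
  qed simp
  finally show ?thesis by (simp add: binform_def)
qed

lemma binform_nonzero:
  fixes f :: "int poly" and x y :: int
  assumes irr: "irreducible (map_poly (of_int :: int \<Rightarrow> rat) f)" and deg: "degree f \<ge> 2"
    and y: "y \<noteq> 0"
  shows "binform f x y \<noteq> 0"
proof
  assume F0: "binform f x y = 0"
  let ?p = "map_poly (of_int :: int \<Rightarrow> rat) f"
  let ?r = "rat_of_int x / rat_of_int y"
  have "rat_of_int y ^ degree f * poly ?p ?r = 0" using binform_poly[OF y, of f x] F0 by simp
  then have "poly ?p ?r = 0" using y by simp
  then have "[:-?r, 1:] dvd ?p" by (simp add: poly_eq_0_iff_dvd)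
  then obtain q where q: "?p = [:-?r, 1:] * q" by (elim dvdE)
  have d1: "degree [:-?r, 1:] = 1" by simp
  have "\<not> is_unit [:-?r, 1:]"
  proof
    assume "is_unit [:-?r, 1:]"
    then have "degree [:-?r, 1:] = 0" by (simp add: is_unit_iff_degree)
    then show False using d1 by simp
  qed
  then have "is_unit q" using irr q irreducibleD by blast
  have qnz: "q \<noteq> 0" using \<open>is_unit q\<close> by auto
  have "degree q = 0" using is_unit_iff_degree qnz \<open>is_unit q\<close> by blast
  then have "degree ?p = 1"
  proof -
    have "degree ([:-?r, 1:] * q) = degree [:-?r, 1:] + degree q"
      by (rule degree_mult_eq) (use qnz in auto)
    then show ?thesis using q d1 \<open>degree q = 0\<close> by presburger
  qed
  moreover have "degree ?p = degree f" by (simp add: degree_map_poly)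
  ultimately show False using deg by simp
qed
theorem lemma4p4:
  fixes f :: "int poly" and n s h \<kappa> :: nat and alpha :: "nat \<Rightarrow> complex"
    and x0 y0 x y :: int and i :: nat
  assumes n3: "n \<ge> 3"
    and degf: "degree f = n"
    and irr: "irreducible (map_poly (of_int :: int \<Rightarrow> rat) f)"
    and c0: "coeff f 0 \<noteq> 0"
    and sdef: "s = nterms f"
    and hpos: "h > 0"
    and kappa: "\<kappa> > 1"
    and hbound: "real h \<le> cmod (disc f alpha) powr (1 / (2 * (real n - 1) * (2 + 1 / real \<kappa>)))
                   / ((3 * R_const n) powr (real n / 2) * (real n * real s) powr (2 * real s + real n))"
    and roots: "map_poly of_int f = smult (of_int (lead_coeff f)) (\<Prod>j\<in>{1..n}. [:- alpha j, 1:])"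
    and sol0: "is_solution f h x0 y0" and y0nn: "0 \<le> y0" and y0le: "real_of_int y0 \<le> Y_S n s h \<kappa>"
    and y0min: "\<forall>u v. is_solution f h u v \<and> 0 \<le> v \<and> real_of_int v \<le> Y_S n s h \<kappa> \<longrightarrow> y0 \<le> v"
    and L1min: "\<forall>j\<in>{1..n}. cmod (Lf alpha 1 x0 y0) \<le> cmod (Lf alpha j x0 y0)"
    and i: "i \<in> {1..n}"
    and cop: "coprime x y"
    and notA: "(x, y) \<notin> {(x0, y0)} \<union> {(u, v). is_solution f h u v \<and> 0 < v \<and>
                  real_of_int v \<le> Y_S n s h \<kappa> \<and> cmod (Lf alpha 1 u v) < 1 / (2 * Y_S n s h \<kappa>)}"
    and ypos: "0 < y" and yle: "real_of_int y \<le> Y_S n s h \<kappa>"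
    and Fle: "\<bar>binform f x y\<bar> \<le> int h"
    and Li: "cmod (Lf alpha i x y) > 1 / (2 * real_of_int y)"
  shows "\<forall>x' y' m. x' * y - x * y' = 1 \<longrightarrow>
           \<bar>Re (beta alpha 1 x y x' y') - real_of_int m\<bar> \<le> 1 / 2 \<longrightarrow>
           cmod (of_int m - beta alpha i x y x' y') \<le> 7 / 2 + 2 * real h powr (1 / real n) * Y_S n s h \<kappa>"
  
proof (intro allI impI)
  fix x' y' m :: int
  assume det: "x' * y - x * y' = 1"
    and mclose: "\<bar>Re (beta alpha 1 x y x' y') - real_of_int m\<bar> \<le> 1 / 2"
  have yc: "complex_of_int y \<noteq> 0" using ypos by simp
  have y1: "real_of_int y \<ge> 1" using ypos by simp
  have YS1: "Y_S n s h \<kappa> \<ge> 1" using yle y1 by linarith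
  have hp: "real h powr (1 / real n) \<ge> 1" using hpos by (simp add: ge_one_powr_ge_zero)
  have Fnz: "binform f x y \<noteq> 0"
    using binform_nonzero[OF irr] degf n3 ypos by simp
  have sol: "is_solution f h x y" unfolding is_solution_def using cop Fnz Fle by simp
  have L1big: "cmod (Lf alpha 1 x y) \<ge> 1 / (2 * Y_S n s h \<kappa>)"
    using notA sol ypos yle by auto
  have L1pos: "cmod (Lf alpha 1 x y) > 0" using L1big YS1
    by (smt (verit) divide_pos_pos)
  have Lipos: "cmod (Lf alpha i x y) > 0" using Li ypos
    by (smt (verit) divide_pos_pos of_int_pos)
  have ident: "beta alpha j x y x' y' = - of_int y' / of_int y - 1 / (of_int y * Lf alpha j x y)"
    if "Lf alpha j x y \<noteq> 0" for j
  proof -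
    have "Lf alpha j x' y' * of_int y - Lf alpha j x y * of_int y' = 1"
    proof -
      have "complex_of_int (x' * y - x * y') = 1" using det by simp
      then show ?thesis unfolding Lf_def by (simp add: algebra_simps)
    qed
    then have "Lf alpha j x' y' = (1 + Lf alpha j x y * of_int y') / of_int y"
      using yc by (simp add: field_simps)
    then show ?thesis unfolding beta_def using that yc by (simp add: field_simps)
  qed
  define z1 where "z1 = 1 / (of_int y * Lf alpha 1 x y)"
  define zi where "zi = 1 / (of_int y * Lf alpha i x y)"
  have b1: "beta alpha 1 x y x' y' = - of_int y' / of_int y - z1"
    using ident[of 1] L1pos unfolding z1_def by auto
  have bi: "beta alpha i x y x' y' = - of_int y' / of_int y - zi"
    using ident[of i] Lipos unfolding zi_def by auto
  have z1b: "cmod z1 \<le> 2 * Y_S n s h \<kappa>"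
  proof -
    have "cmod z1 = 1 / (real_of_int y * cmod (Lf alpha 1 x y))"
      unfolding z1_def using ypos by (simp add: norm_divide norm_mult)
    also have "\<dots> \<le> 1 / cmod (Lf alpha 1 x y)"
      using y1 L1pos by (simp add: divide_simps)
    also have "\<dots> \<le> 2 * Y_S n s h \<kappa>"
      using L1big L1pos YS1 by (simp add: divide_simps mult.commute)
    finally show ?thesis .
  qed
  have zib: "cmod zi \<le> 2"
  proof -
    have "cmod zi = 1 / (real_of_int y * cmod (Lf alpha i x y))"
      unfolding zi_def using ypos by (simp add: norm_divide norm_mult)
    also have "\<dots> \<le> 2"
      using Li ypos Lipos by (simp add: divide_simps) (simp add: mult_ac)
    finally show ?thesis .
  qed
  define t where "t = real_of_int m + real_of_int y' / real_of_int y"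
  have "of_int m - beta alpha i x y x' y' = complex_of_real t + zi"
    unfolding bi t_def by simp
  then have "cmod (of_int m - beta alpha i x y x' y') \<le> \<bar>t\<bar> + 2"
    using zib norm_triangle_ineq[of "complex_of_real t" zi] by simp
  moreover have "\<bar>t\<bar> \<le> 1/2 + cmod z1"
  proof -
    have "Re (beta alpha 1 x y x' y') = - real_of_int y' / real_of_int y - Re z1"
      unfolding b1 by simp
    then have "t = real_of_int m - Re (beta alpha 1 x y x' y') - Re z1"
      unfolding t_def by simp
    then show ?thesis using mclose abs_Re_le_cmod[of z1] by linarith
  qed
  moreover have "2 * Y_S n s h \<kappa> \<le> 2 * real h powr (1 / real n) * Y_S n s h \<kappa>"
    using hp YS1 by simp
  ultimately show "cmod (of_int m - beta alpha i x y x' y') \<le> 7 / 2 + 2 * real h powr (1 / real n) * Y_S n s h \<kappa>"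
    using z1b by linarith
qed

end
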